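(* Let $a,b,c$ be positive integers and $r=[2a,2b,-2c]$. Then all zeros of $\Delta_{K(r)}(t)$ are real if and only if $a\ge c$.
   Context: For a finite sequence $r=[2a_1,2a_2,\dots,2a_n]$ of nonzero even integers, $K(r)$ denotes the 2-bridge knot or link whose associated rational number has the even continued fraction expansion $1/(2a_1-1/(2a_2-\cdots-1/(2a_n)))$ ($K(r)$ is a knot if $n$ is even and a 2-component link if $n$ is odd). Let $M(r)$ be the $n\times n$ integer matrix whose $(k,k)$-entry is $a_k$ ($1\le k\le n$), whose $(k,k+1)$-entry is $1$ ($1\le k\le n-1$), and whose other entries are $0$; it is a Seifert matrix of $K(r)$, and $\Delta_{K(r)}(t)=\det(tM(r)-M(r)^T)$ is the (reduced) Alexander polynomial of $K(r)$ (well defined up to sign). *)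

theory Defs
  imports "Jordan_Normal_Form.Determinant" "HOL-Computational_Algebra.Polynomial" Complex_Main
begin

definition seifert_matrix :: "int list \<Rightarrow> int mat" where
  "seifert_matrix r = mat (length r) (length r)
     (\<lambda>(i,j). if i = j then (r ! i) div 2 else if j = i + 1 then 1 else 0)"

text \<open>The Alexander polynomial det(t M - M^T) as an integer polynomial in t.\<close>
definition alexander_poly :: "int list \<Rightarrow> int poly" where
  "alexander_poly r = (let M = seifert_matrix r; n = length r in
     det (mat n n (\<lambda>(i,j). [: - (M $$ (j,i)), M $$ (i,j) :])))"

definition all_zeros_real :: "int poly \<Rightarrow> bool" where
  "all_zeros_real p \<longleftrightarrow> (\<forall>z::complex. poly (map_poly of_int p) z = 0 \<longrightarrow> Im z = 0)"

end

theory Submission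
  imports Defs
begin
lemma det2: assumes A: "(A :: 'a :: comm_ring_1 mat) \<in> carrier_mat 2 2"
  shows "det A = A$$(0,0)*A$$(1,1) - A$$(0,1)*A$$(1,0)"
proof -
  have "det A = (\<Sum>j<2. A $$ (0,j) * cofactor A 0 j)" by (rule laplace_expansion_row[OF A]) simp
  also have "\<dots> = A$$(0,0)*A$$(1,1) - A$$(0,1)*A$$(1,0)"
    using A by (simp add: numeral_2_eq_2 cofactor_def det_single mat_delete_def)
  finally show ?thesis .
qed
lemma det3: assumes A: "(A :: 'a :: comm_ring_1 mat) \<in> carrier_mat 3 3"
  shows "det A = A$$(0,0)*(A$$(1,1)*A$$(2,2) - A$$(1,2)*A$$(2,1))
     - A$$(0,1)*(A$$(1,0)*A$$(2,2) - A$$(1,2)*A$$(2,0))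
     + A$$(0,2)*(A$$(1,0)*A$$(2,1) - A$$(1,1)*A$$(2,0))"
proof -
  have c: "mat_delete A 0 j \<in> carrier_mat 2 2" for j using mat_delete_carrier[OF A] by simp
  have s: "det A = A $$ (0,0) * cofactor A 0 0 + A $$ (0,1) * cofactor A 0 1 + A $$ (0,2) * cofactor A 0 2"
    by (subst laplace_expansion_row[OF A, of 0]) (simp_all add: numeral_3_eq_3 numeral_2_eq_2)
  have c0: "cofactor A 0 0 = A$$(1,1)*A$$(2,2) - A$$(1,2)*A$$(2,1)"
    unfolding cofactor_def det2[OF c] using A by (simp add: mat_delete_def numeral_2_eq_2)
  have c1: "cofactor A 0 1 = -(A$$(1,0)*A$$(2,2) - A$$(1,2)*A$$(2,0))"
    unfolding cofactor_def det2[OF c] using A by (simp add: mat_delete_def numeral_2_eq_2)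
  have c2: "cofactor A 0 2 = A$$(1,0)*A$$(2,1) - A$$(1,1)*A$$(2,0)"
    unfolding cofactor_def det2[OF c] using A by (simp add: mat_delete_def numeral_2_eq_2)
  show ?thesis unfolding s c0 c1 c2 by (simp add: algebra_simps)
qed

lemma alex: "alexander_poly [2*a, 2*b, -2*c] = [:a*b*c, -(a*b*c + (2*a*b*c + a - c)), a*b*c + (2*a*b*c + a - c), -(a*b*c):]"
proof -
  have "alexander_poly [2*a, 2*b, -2*c] = det (mat 3 3 (\<lambda>(i,j). [: - (seifert_matrix [2*a, 2*b, -2*c] $$ (j,i)), seifert_matrix [2*a, 2*b, -2*c] $$ (i,j) :]))"
    by (simp add: alexander_poly_def Let_def numeral_3_eq_3)
  also have "\<dots> = [:a*b*c, -(a*b*c + (2*a*b*c + a - c)), a*b*c + (2*a*b*c + a - c), -(a*b*c):]"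
  proof -
    have d: "- (c * 2) div (2::int) = - c" "- (2 * c) div (2::int) = - c" by presburger+
    show ?thesis
    apply (subst det3, simp)
    apply (rule poly_ext)
    apply (simp add: seifert_matrix_def numeral_3_eq_3 numeral_2_eq_2 d algebra_simps)
    done
  qed
  finally show ?thesis .
qed
lemma evalq: "poly (map_poly of_int [:k, -(k + m), k + m, -(k::int):]) (z::complex)
   = (z - 1) * (- of_int k * z^2 + of_int m * z - of_int k)"
  by (simp add: map_poly_pCons algebra_simps power2_eq_square)

lemma quad_parts:
  fixes k m :: real and z :: complex
  shows "(- of_real k * z^2 + of_real m * z - of_real k = 0) \<longleftrightarrow>
    (- k * (Re z ^2 - Im z ^2) + m * Re z - k = 0 \<and> Im z * (m - 2 * k * Re z) = 0)"
  by (simp add: complex_eq_iff power2_eq_square algebra_simps)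

theorem proposition8p5:
  fixes a b c :: int
  assumes "a > 0" and "b > 0" and "c > 0"
  shows "all_zeros_real (alexander_poly [2*a, 2*b, -2*c]) \<longleftrightarrow> a \<ge> c"
proof -
  define k where "k = a*b*c"
  define m where "m = 2*a*b*c + a - c"
  have kc: "k \<ge> c" unfolding k_def
  proof -
    have "a*b \<ge> 1" using assms by (simp add: int_one_le_iff_zero_less)
    thus "a*b*c \<ge> c" using assms(3) mult_right_mono[of 1 "a*b" c] by simp
  qed
  have kpos: "k > 0" unfolding k_def using assms by simp
  have A: "all_zeros_real (alexander_poly [2*a, 2*b, -2*c]) \<longleftrightarrow>
     (\<forall>z::complex. (z - 1) * (- of_int k * z^2 + of_int m * z - of_int k) = 0 \<longrightarrow> Im z = 0)"
    by (simp only: all_zeros_real_def alex evalq k_def m_def)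
  have B: "(- of_int k * z^2 + of_int m * z - of_int k = 0) \<longleftrightarrow>
    (- real_of_int k * (Re z ^2 - Im z ^2) + real_of_int m * Re z - real_of_int k = 0 \<and> Im z * (real_of_int m - 2 * real_of_int k * Re z) = 0)" for z :: complex
    using quad_parts[of "real_of_int k" z "real_of_int m"] by simp
  show ?thesis unfolding A
  proof
    assume H: "\<forall>z::complex. (z - 1) * (- of_int k * z^2 + of_int m * z - of_int k) = 0 \<longrightarrow> Im z = 0"
    show "a \<ge> c"
    proof (rule ccontr)
      assume "\<not> a \<ge> c"
      have mk: "m = 2*k + a - c" by (simp add: m_def k_def)
      hence lt: "m < 2*k" "m > -2*k" using kc assms \<open>\<not> a \<ge> c\<close> by linarith+
      define x :: real where "x = m / (2*k)"
      have mx: "real_of_int m = 2 * real_of_int k * x" unfolding x_def using kpos by simp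
      have x1: "x^2 < 1"
      proof -
        have "\<bar>real_of_int m\<bar> < 2 * real_of_int k" using lt by linarith
        moreover have "\<bar>x\<bar> = \<bar>real_of_int m\<bar> / (2*real_of_int k)" unfolding x_def using kpos by (simp add: abs_divide)
        ultimately have "\<bar>x\<bar> < 1" using kpos by (simp add: divide_less_eq)
        thus ?thesis by (simp add: abs_square_less_1)
      qed
      define y where "y = sqrt (1 - x^2)"
      have ypos: "y > 0" unfolding y_def using x1 by simp
      have y2: "y^2 = 1 - x^2" unfolding y_def using x1 by simp
      have "- of_int k * (Complex x y)^2 + of_int m * Complex x y - of_int k = 0"
      proof -
        have "(x*x+y*y)*real_of_int k = real_of_int k" using y2 by (simp add: power2_eq_square)
        hence e: "x * (x * real_of_int k) + y * (y * real_of_int k) = real_of_int k" by (simp add: algebra_simps)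
        show ?thesis unfolding B using y2 mx e by (simp add: algebra_simps power2_eq_square)
      qed
      hence "(Complex x y - 1) * (- of_int k * (Complex x y)^2 + of_int m * Complex x y - of_int k) = 0"
        by simp
      with H have "y = 0" by fastforce
      with ypos show False by simp
    qed
  next
    assume ac: "a \<ge> c"
    show "\<forall>z::complex. (z - 1) * (- of_int k * z^2 + of_int m * z - of_int k) = 0 \<longrightarrow> Im z = 0"
    proof (intro allI impI)
      fix z :: complex
      assume "(z - 1) * (- of_int k * z^2 + of_int m * z - of_int k) = 0"
      hence "z = 1 \<or> (- of_int k * z^2 + of_int m * z - of_int k = 0)" by simp
      thus "Im z = 0"
      proof
        assume "z = 1" thus ?thesis by simp
      next
        assume "- of_int k * z^2 + of_int m * z - of_int k = 0"
        hence re: "- real_of_int k * (Re z ^2 - Im z ^2) + real_of_int m * Re z - real_of_int k = 0"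
          and im: "Im z * (real_of_int m - 2 * real_of_int k * Re z) = 0" unfolding B by auto
        show "Im z = 0"
        proof (rule ccontr)
          assume ne: "Im z \<noteq> 0"
          hence mx: "real_of_int m = 2 * real_of_int k * Re z" using im by simp
          have "m \<ge> 2*k" using ac unfolding m_def k_def by linarith
          hence "2 * real_of_int k * Re z \<ge> 2 * real_of_int k" using mx by linarith
          hence x1: "Re z \<ge> 1" using kpos by simp
          have "real_of_int k * (Re z ^2 + Im z ^2 - 1) = 0" using re mx by (simp add: algebra_simps power2_eq_square)
          hence "Re z ^2 + Im z ^2 = 1" using kpos by simp
          moreover have "Re z ^2 \<ge> 1" using x1 by (simp add: one_le_power)
          moreover have "Im z ^2 > 0" using ne by simp
          ultimately show False by linarith
        qed
      qed
    qed
  qed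
qed
end
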